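(* Let $\phi\neq\psi$ be two seeds. Then $perms(\phi)\cap perms(\psi)\neq\emptyset$ if and only if either $mis(\phi)=mis(\psi)\oplus 1$ or $mis(\psi)=mis(\phi)\oplus 1$, and moreover the sequence obtained from $\phi$ by deleting the entry $mis(\psi)$ coincides with the sequence obtained from $\psi$ by deleting the entry $mis(\phi)$.
   Context: Fix an integer $n\ge 5$. An $n$-permutation is a sequence $(a_1,\dots,a_n)$ of the distinct elements of $\{1,\dots,n\}$. On $\{1,\dots,n-1\}$ let $a\oplus 1=a+1$ for $a<n-1$ and $(n-1)\oplus 1=1$. A seed is an $(n-1)$-tuple $\psi=(a_1,\dots,a_{n-1})$ of distinct elements of $\{1,\dots,n\}$ with $a_1=n$ and $a_2\oplus1\notin\{a_1,\dots,a_{n-1}\}$; its missing element is $mis(\psi)=a_2\oplus 1$. The package $perms(\psi)$ is the set of all $n$-permutations obtained from $\psi$ by inserting $mis(\psi)$ at any position and then applying any cyclic rotation. *)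

theory Defs
  imports Main
begin

definition oplus1 :: "nat \<Rightarrow> nat \<Rightarrow> nat" where
  "oplus1 n a = (if a < n - 1 then a + 1 else 1)"

text \<open>A seed: an (n-1)-tuple (list, 0-indexed, so a_1 = psi!0, a_2 = psi!1) of distinct
  elements of {1..n} with a_1 = n and a_2 (+) 1 not among its entries.\<close>
definition seed :: "nat \<Rightarrow> nat list \<Rightarrow> bool" where
  "seed n psi \<longleftrightarrow> length psi = n - 1 \<and> distinct psi \<and> set psi \<subseteq> {1..n}
     \<and> psi ! 0 = n \<and> oplus1 n (psi ! 1) \<notin> set psi"

definition mis :: "nat \<Rightarrow> nat list \<Rightarrow> nat" where
  "mis n psi = oplus1 n (psi ! 1)"

definition perms :: "nat \<Rightarrow> nat list \<Rightarrow> nat list set" where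
  "perms n psi = {rotate k (take i psi @ mis n psi # drop i psi) | i k. i \<le> length psi}"

end

theory Submission
  imports Defs
begin

definition ins :: "nat \<Rightarrow> nat list \<Rightarrow> nat \<Rightarrow> nat list" where
  "ins n psi i = take i psi @ mis n psi # drop i psi"

lemma oplus1_range: "n \<ge> 3 \<Longrightarrow> oplus1 n a \<in> {1..n-1}"
  by (auto simp: oplus1_def)

lemma oplus1_inj: "n \<ge> 3 \<Longrightarrow> a \<in> {1..n-1} \<Longrightarrow> b \<in> {1..n-1} \<Longrightarrow> oplus1 n a = oplus1 n b \<Longrightarrow> a = b"
  unfolding oplus1_def
  by (cases "a < n - 1"; cases "b < n - 1") (auto split: if_splits)

lemma oplus1_neq: "n \<ge> 4 \<Longrightarrow> a \<in> {1..n-1} \<Longrightarrow> oplus1 n a \<noteq> a"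
  by (auto simp: oplus1_def)

lemma seed_facts:
  assumes "n \<ge> 5" "seed n psi"
  shows "length psi = n - 1" "distinct psi" "psi ! 0 = n" "mis n psi \<notin> set psi"
        "mis n psi \<in> {1..n-1}" "psi ! 1 \<in> {1..n-1}" "set psi = {1..n} - {mis n psi}"
        "psi = n # psi!1 # drop 2 psi"
proof -
  show l: "length psi = n - 1" and d: "distinct psi" and p0: "psi ! 0 = n"
    and mm: "mis n psi \<notin> set psi"
    using assms by (auto simp: seed_def mis_def)
  show "mis n psi \<in> {1..n-1}" using oplus1_range assms by (simp add: mis_def)
  have s: "set psi \<subseteq> {1..n}" using assms by (auto simp: seed_def)
  have "psi ! 1 \<in> set psi" using l assms by simp
  moreover have "psi ! 1 \<noteq> n" using d p0 l assms nth_eq_iff_index_eq[of psi 1 0] by auto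
  ultimately have "psi ! 1 \<in> {1..n}" "psi ! 1 \<noteq> n" using s by auto
  then show "psi ! 1 \<in> {1..n-1}" by auto
  have m0: "mis n psi \<in> {1..n-1}" using oplus1_range assms by (simp add: mis_def)
  then have m1: "mis n psi \<in> {1..n}" by auto
  have "set psi \<subseteq> {1..n} - {mis n psi}" using s mm by auto
  moreover have "card (set psi) = card ({1..n} - {mis n psi})"
    using d l m1 by (simp add: distinct_card)
  ultimately show "set psi = {1..n} - {mis n psi}"
    by (intro card_subset_eq) auto
  have "0 < length psi" "1 < length psi" using l assms by simp_all
  then obtain x y zs where xyz: "psi = x # y # zs"
    by (cases psi; cases "tl psi") auto
  then show "psi = n # psi!1 # drop 2 psi" using p0 by simp
qed

lemma ins_facts:
  assumes "n \<ge> 5" "seed n psi" "1 \<le> i" "i \<le> length psi"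
  shows "length (ins n psi i) = n" "distinct (ins n psi i)" "ins n psi i ! 0 = n"
    "removeAll (mis n psi) (ins n psi i) = psi"
    "set (ins n psi i) = insert (mis n psi) (set psi)"
    "i = 1 \<Longrightarrow> ins n psi i ! 1 = mis n psi"
    "i \<ge> 2 \<Longrightarrow> ins n psi i ! 1 = psi ! 1"
proof -
  note f = seed_facts[OF assms(1,2)]
  show "length (ins n psi i) = n" using f(1) assms(1,4) by (simp add: ins_def)
  have d2: "set (take i psi) \<inter> set (drop i psi) = {}"
    using f(2) set_take_disj_set_drop_if_distinct[of psi i i] by simp
  show "distinct (ins n psi i)" using d2 f(2,4) unfolding ins_def
    by (auto simp: distinct_append dest: in_set_takeD in_set_dropD)
  show "ins n psi i ! 0 = n" using f(3) assms(3,4) by (simp add: ins_def nth_append)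
  have "removeAll (mis n psi) (take i psi) = take i psi"
       "removeAll (mis n psi) (drop i psi) = drop i psi"
    using f(4) by (auto intro!: removeAll_id dest: in_set_takeD in_set_dropD)
  then show "removeAll (mis n psi) (ins n psi i) = psi" by (simp add: ins_def)
  show "set (ins n psi i) = insert (mis n psi) (set psi)"
  proof -
    have "set (take i psi) \<union> set (drop i psi) = set psi"
      by (metis append_take_drop_id set_append)
    then show ?thesis unfolding ins_def by auto
  qed
  show "i = 1 \<Longrightarrow> ins n psi i ! 1 = mis n psi" using assms(3,4) by (simp add: ins_def nth_append)
  show "i \<ge> 2 \<Longrightarrow> ins n psi i ! 1 = psi ! 1" using assms(3,4) by (simp add: ins_def nth_append)
qed

lemma perms_ins:
  assumes "n \<ge> 5" "seed n psi" "x \<in> perms n psi"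
  shows "\<exists>i k. 1 \<le> i \<and> i \<le> length psi \<and> x = rotate k (ins n psi i)"
proof -
  note f = seed_facts[OF assms(1,2)]
  obtain i k where x: "x = rotate k (take i psi @ mis n psi # drop i psi)" "i \<le> length psi"
    using assms(3) by (auto simp: perms_def)
  show ?thesis
  proof (cases "i = 0")
    case True
    have r: "rotate (length psi) (psi @ [mis n psi]) = mis n psi # psi"
      by (simp add: rotate_append)
    have x0: "x = rotate k (mis n psi # psi)" using x True by simp
    have "x = rotate k (rotate (length psi) (psi @ [mis n psi]))" using x0 r by metis
    then have "x = rotate (k + length psi) (psi @ [mis n psi])" by (simp add: rotate_rotate)
    moreover have "ins n psi (length psi) = psi @ [mis n psi]" by (simp add: ins_def)
    ultimately have "x = rotate (k + length psi) (ins n psi (length psi))" by simp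
    moreover have "1 \<le> length psi" using f(1) assms(1) by simp
    ultimately show ?thesis by blast
  next
    case False
    then show ?thesis using x by (intro exI[of _ i] exI[of _ k]) (simp add: ins_def)
  qed
qed

lemma rot_eq:
  fixes x y :: "'a list"
  assumes "rotate k1 x = rotate k2 y" "distinct x" "length x = length y" "x \<noteq> []"
    "x ! 0 = y ! 0"
  shows "x = y"
proof -
  define L where "L = length x"
  have Lp: "L > 0" using assms(4) L_def by simp
  define k2' where "k2' = k2 mod L"
  have "rotate k2 y = rotate k2' y" using assms(3) by (simp add: k2'_def L_def rotate_conv_mod[of k2 y])
  have yne: "y \<noteq> []" using assms(3,4) by (metis length_0_conv)
  have "y = rotate (L - k2' + k2') y" using Lp k2'_def assms(3,4) L_def yne by simp
  also have "\<dots> = rotate (L - k2') (rotate k2 y)" using \<open>rotate k2 y = rotate k2' y\<close>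
    by (simp add: rotate_rotate)
  also have "\<dots> = rotate (L - k2' + k1) x" by (metis assms(1) rotate_rotate)
  also have "\<dots> = rotate ((L - k2' + k1) mod L) x" by (simp add: L_def rotate_conv_mod[symmetric])
  finally have y: "y = rotate ((L - k2' + k1) mod L) x" .
  define d where "d = (L - k2' + k1) mod L"
  have dL: "d < L" using Lp d_def by simp
  have "y ! 0 = x ! d" using y dL Lp by (simp add: d_def nth_rotate L_def)
  then have "x ! 0 = x ! d" using assms by simp
  then have "d = 0" using assms(2) dL Lp nth_eq_iff_index_eq[of x 0 d] L_def by auto
  then show ?thesis using y d_def by simp
qed



lemma removeAll_comm: "removeAll a (removeAll b xs) = removeAll b (removeAll a xs)"
  by (induct xs) auto

lemma back_lem:
  assumes "n \<ge> 5" "seed n phi" "seed n psi" "mis n psi = oplus1 n (mis n phi)"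
     "removeAll (mis n psi) phi = removeAll (mis n phi) psi"
  shows "\<exists>j. 1 \<le> j \<and> j \<le> length psi \<and> ins n phi 1 = ins n psi j"
proof -
  note fa = seed_facts[OF assms(1,2)] and fb = seed_facts[OF assms(1,3)]
  define a where "a = mis n phi"
  define b where "b = mis n psi"
  have ar: "a \<in> {1..n-1}" using fa(5) unfolding a_def .
  have br: "b \<in> {1..n-1}" using fb(5) unfolding b_def .
  have bo: "b = oplus1 n a" using assms(4) unfolding a_def b_def .
  have e: "oplus1 n (psi ! 1) = oplus1 n a" using bo unfolding b_def mis_def by simp
  have p1: "psi ! 1 = a" using oplus1_inj[OF _ fb(6) ar e] assms(1) by simp
  have ba: "b \<noteq> a" using oplus1_neq[OF _ ar] bo assms(1) by simp
  have bn: "b \<noteq> n" using br by auto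
  have an: "a \<noteq> n" using ar by auto
  have sa: "set phi = {1..n} - {a}" using fa(7) unfolding a_def .
  have rab: "removeAll b phi = removeAll a psi" using assms(5) unfolding a_def b_def .
  define t where "t = drop 1 phi"
  have h0: "phi ! 0 # drop 1 phi = phi" using Cons_nth_drop_Suc[of 0 phi] fa(1) assms(1) by simp
  have phit: "phi = n # t" unfolding t_def using h0 fa(3) by simp
  have pi: "ins n phi 1 = n # a # t"
  proof -
    have "take 1 phi = [n]" using phit by (metis One_nat_def take0 take_Suc_Cons)
    moreover have "drop 1 phi = t" by (simp add: t_def)
    ultimately show ?thesis unfolding ins_def a_def[symmetric] by simp
  qed
  have psid: "psi = n # a # drop 2 psi" using fb(8)[unfolded p1] .
  obtain u where pu: "psi = n # a # u" using psid by blast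
  have au: "a \<notin> set u" using fb(2) pu by simp
  have "removeAll a psi = n # u" using pu au an by simp
  moreover have "removeAll b phi = n # removeAll b t" using phit bn by simp
  ultimately have rt: "removeAll b t = u" using rab by simp
  define pi where "pi = ins n phi 1"
  have "removeAll b pi = n # a # u" using pi pi_def ba bn rt by simp
  then have rpi: "removeAll b pi = psi" using pu by simp
  have "b \<in> {1..n}" using br by auto
  then have bphi: "b \<in> set phi" unfolding sa using ba by simp
  have l1: "1 \<le> length phi" using fa(1) assms(1) by simp
  have I5: "set (ins n phi 1) = insert (mis n phi) (set phi)"
    by (rule ins_facts(5)[OF assms(1,2) order.refl l1])
  have bpi: "b \<in> set pi" unfolding pi_def I5 using bphi by simp
  have dpi: "distinct pi" unfolding pi_def by (rule ins_facts(2)[OF assms(1,2) order.refl l1])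
  obtain us vs where uv: "pi = us @ b # vs" "b \<notin> set us" using split_list_first[OF bpi] by blast
  have "b \<notin> set vs" using dpi uv by simp
  then have psiuv: "psi = us @ vs" using rpi uv by simp
  have e1: "ins n phi 1 = us @ b # vs" using pi_def uv(1) by simp
  have "pi ! 0 = n" using pi pi_def by simp
  then have "us \<noteq> []" using uv(1) bn by (metis append_Nil nth_Cons_0)
  then have j1: "1 \<le> length us" by (cases us) auto
  have j2: "length us \<le> length psi" using psiuv by simp
  have "ins n psi (length us) = take (length us) psi @ b # drop (length us) psi"
    by (simp add: ins_def b_def)
  also have "\<dots> = us @ b # vs" using psiuv by simp
  finally have e2: "ins n psi (length us) = us @ b # vs" .
  show ?thesis using j1 j2 e1 e2 by metis
qed

theorem mainTheorem2:
  fixes n :: nat and phi psi :: "nat list"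
  assumes "n \<ge> 5" and "seed n phi" and "seed n psi" and "phi \<noteq> psi"
  shows "perms n phi \<inter> perms n psi \<noteq> {} \<longleftrightarrow>
    ((mis n phi = oplus1 n (mis n psi) \<or> mis n psi = oplus1 n (mis n phi))
     \<and> removeAll (mis n psi) phi = removeAll (mis n phi) psi)"
proof -
  note fa = seed_facts[OF assms(1,2)] and fb = seed_facts[OF assms(1,3)]
  have key: "perms n phi \<inter> perms n psi \<noteq> {} \<longleftrightarrow>
     (\<exists>i j. 1 \<le> i \<and> i \<le> length phi \<and> 1 \<le> j \<and> j \<le> length psi \<and> ins n phi i = ins n psi j)"
  proof
    assume "perms n phi \<inter> perms n psi \<noteq> {}"
    then obtain x where x: "x \<in> perms n phi" "x \<in> perms n psi" by blast
    obtain i k1 where i: "1 \<le> i" "i \<le> length phi" "x = rotate k1 (ins n phi i)"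
      using perms_ins[OF assms(1,2) x(1)] by blast
    obtain j k2 where j: "1 \<le> j" "j \<le> length psi" "x = rotate k2 (ins n psi j)"
      using perms_ins[OF assms(1,3) x(2)] by blast
    note ia = ins_facts[OF assms(1,2) i(1,2)] and jb = ins_facts[OF assms(1,3) j(1,2)]
    have "ins n phi i = ins n psi j"
    proof (rule rot_eq[of k1 _ k2])
      show "rotate k1 (ins n phi i) = rotate k2 (ins n psi j)" by (simp only: i(3)[symmetric] j(3)[symmetric])
      show "distinct (ins n phi i)" by (rule ia(2))
      show "length (ins n phi i) = length (ins n psi j)" using ia(1) jb(1) by simp
      show "ins n phi i \<noteq> []" using ia(1) assms(1) by auto
      show "ins n phi i ! 0 = ins n psi j ! 0" using ia(3) jb(3) by simp
    qed
    then show "\<exists>i j. 1 \<le> i \<and> i \<le> length phi \<and> 1 \<le> j \<and> j \<le> length psi \<and> ins n phi i = ins n psi j"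
      using i(1,2) j(1,2) by blast
  next
    assume "\<exists>i j. 1 \<le> i \<and> i \<le> length phi \<and> 1 \<le> j \<and> j \<le> length psi \<and> ins n phi i = ins n psi j"
    then obtain i j where ij: "1 \<le> i" "i \<le> length phi" "1 \<le> j" "j \<le> length psi" "ins n phi i = ins n psi j"
      by blast
    have "ins n phi i \<in> perms n phi" unfolding perms_def ins_def
      by (intro CollectI exI[of _ i] exI[of _ 0]) (simp add: ij(2))
    then have m1: "ins n psi j \<in> perms n phi" unfolding ij(5) .
    have m2: "ins n psi j \<in> perms n psi" unfolding perms_def ins_def
      by (intro CollectI exI[of _ j] exI[of _ 0]) (simp add: ij(4))
    show "perms n phi \<inter> perms n psi \<noteq> {}" using m1 m2 by blast
  qed
  show ?thesis
  proof
    assume "perms n phi \<inter> perms n psi \<noteq> {}"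
    then obtain i j where ij: "1 \<le> i" "i \<le> length phi" "1 \<le> j" "j \<le> length psi" "ins n phi i = ins n psi j"
      using key by blast
    note ia = ins_facts[OF assms(1,2) ij(1,2)] and jb = ins_facts[OF assms(1,3) ij(3,4)]
    have ab: "mis n phi \<noteq> mis n psi"
    proof
      assume h: "mis n phi = mis n psi"
      have "phi = removeAll (mis n phi) (ins n phi i)" by (rule ia(4)[symmetric])
      also have "\<dots> = removeAll (mis n psi) (ins n psi j)" unfolding h ij(5) ..
      also have "\<dots> = psi" by (rule jb(4))
      finally show False using assms(4) by simp
    qed
    have "removeAll (mis n psi) phi = removeAll (mis n psi) (removeAll (mis n phi) (ins n phi i))"
      unfolding ia(4) ..
    also have "\<dots> = removeAll (mis n phi) (removeAll (mis n psi) (ins n psi j))"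
      unfolding ij(5) by (rule removeAll_comm)
    also have "\<dots> = removeAll (mis n phi) psi" unfolding jb(4) ..
    finally have rr: "removeAll (mis n psi) phi = removeAll (mis n phi) psi" .
    have "mis n phi = oplus1 n (mis n psi) \<or> mis n psi = oplus1 n (mis n phi)"
    proof (cases "i = 1")
      case True
      then have i1: "ins n phi i ! 1 = mis n phi" using ia(6) by simp
      show ?thesis
      proof (cases "j = 1")
        case True
        then have "ins n psi j ! 1 = mis n psi" using jb(6) by simp
        then show ?thesis using i1 ij(5) ab by simp
      next
        case False
        then have "2 \<le> j" using ij(3) by simp
        then have "ins n psi j ! 1 = psi ! 1" by (rule jb(7))
        then have "psi ! 1 = mis n phi" using i1 ij(5) by simp
        then show ?thesis by (simp add: mis_def)
      qed
    next
      case False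
      then have "2 \<le> i" using ij(1) by simp
      then have i1: "ins n phi i ! 1 = phi ! 1" by (rule ia(7))
      show ?thesis
      proof (cases "j = 1")
        case True
        then have "ins n psi j ! 1 = mis n psi" using jb(6) by simp
        then have "phi ! 1 = mis n psi" using i1 ij(5) by simp
        then show ?thesis by (simp add: mis_def)
      next
        case False
        then have "2 \<le> j" using ij(3) by simp
        then have "ins n psi j ! 1 = psi ! 1" by (rule jb(7))
        then have "psi ! 1 = phi ! 1" using i1 ij(5) by simp
        then show ?thesis using ab by (simp add: mis_def)
      qed
    qed
    then show "(mis n phi = oplus1 n (mis n psi) \<or> mis n psi = oplus1 n (mis n phi))
     \<and> removeAll (mis n psi) phi = removeAll (mis n phi) psi" using rr by blast
  next
    assume h: "(mis n phi = oplus1 n (mis n psi) \<or> mis n psi = oplus1 n (mis n phi))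
     \<and> removeAll (mis n psi) phi = removeAll (mis n phi) psi"
    have l1: "1 \<le> length phi" "1 \<le> length psi" using fa(1) fb(1) assms(1) by auto
    show "perms n phi \<inter> perms n psi \<noteq> {}"
    proof (cases "mis n psi = oplus1 n (mis n phi)")
      case True
      then obtain j where "1 \<le> j \<and> j \<le> length psi \<and> ins n phi 1 = ins n psi j"
        using back_lem[OF assms(1,2,3) True h[THEN conjunct2]] by blast
      then show ?thesis using key l1 by blast
    next
      case False
      then have "mis n phi = oplus1 n (mis n psi)" using h by blast
      then obtain j where "1 \<le> j \<and> j \<le> length phi \<and> ins n psi 1 = ins n phi j"
        using back_lem[OF assms(1,3,2) _ h[THEN conjunct2, symmetric]] by blast
      then have "\<exists>i j'. 1 \<le> i \<and> i \<le> length phi \<and> 1 \<le> j' \<and> j' \<le> length psi \<and> ins n phi i = ins n psi j'"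
        using l1 by (intro exI[of _ j] exI[of _ 1]) auto
      then show ?thesis using key by blast
    qed
  qed
qed

end
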